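(* Let $X$ be a Hausdorff hereditarily disconnected space and $p\in X$ be such that $X-\{p\}$ is totally disconnected. Then $\mathcal{K}(X)$ is hereditarily disconnected.
   Context: $\mathcal{K}(X)$ is the set of nonempty compact subsets of $X$ with the Vietoris topology (generated by $U^+=\{A: A\subset U\}$ and $U^-=\{A: A\cap U\neq\emptyset\}$ for $U$ open in $X$). A space is hereditarily disconnected if every nonempty connected subset is a singleton; it is totally disconnected if any two distinct points can be separated by a clopen set (containing one but not the other). *)

theory Defs
  imports "HOL-Analysis.Analysis"
begin

definition vietoris :: "'a topology \<Rightarrow> 'a set topology" where
  "vietoris X = subtopology
     (topology_generated_by
        ({{A. A \<subseteq> U} | U. openin X U} \<union> {{A. A \<inter> U \<noteq> {}} | U. openin X U}))
     {A. A \<noteq> {} \<and> compactin X A}"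

definition hereditarily_disconnected_space :: "'a topology \<Rightarrow> bool" where
  "hereditarily_disconnected_space X \<longleftrightarrow>
     (\<forall>S. S \<subseteq> topspace X \<and> S \<noteq> {} \<and> connectedin X S \<longrightarrow> (\<exists>x. S = {x}))"

definition totally_disconnected_space :: "'a topology \<Rightarrow> bool" where
  "totally_disconnected_space X \<longleftrightarrow>
     (\<forall>x \<in> topspace X. \<forall>y \<in> topspace X. x \<noteq> y \<longrightarrow>
        (\<exists>C. openin X C \<and> closedin X C \<and> x \<in> C \<and> y \<notin> C))"

end

theory Submission
  imports Defs
begin

lemma vietoris_sep:
  assumes conn: "connectedin (vietoris X) CC" and oU: "openin X U" and oV: "openin X V"
    and eq: "\<forall>K\<in>CC. (K \<subseteq> U) \<longleftrightarrow> (K \<inter> V = {})"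
  shows "(\<forall>K\<in>CC. K \<subseteq> U) \<or> (\<forall>K\<in>CC. K \<inter> V \<noteq> {})"
proof -
  define M where "M = {A. A \<noteq> {} \<and> compactin X A}"
  define B where "B = ({{A. A \<subseteq> U} | U. openin X U} \<union> {{A. A \<inter> U \<noteq> {}} | U. openin X U})"
  have v: "vietoris X = subtopology (topology_generated_by B) M"
    unfolding vietoris_def B_def M_def by simp
  define E1 where "E1 = {A. A \<subseteq> U} \<inter> M"
  define E2 where "E2 = {A. A \<inter> V \<noteq> {}} \<inter> M"
  have o1: "openin (vietoris X) E1"
    unfolding v E1_def
    by (rule openin_subtopology_Int, rule topology_generated_by_Basis) (use oU in \<open>auto simp: B_def\<close>)
  have o2: "openin (vietoris X) E2"
    unfolding v E2_def
    by (rule openin_subtopology_Int, rule topology_generated_by_Basis) (use oV in \<open>auto simp: B_def\<close>)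
  have CM: "CC \<subseteq> M"
    using connectedin_subset_topspace[OF conn] unfolding v by auto
  have "CC \<subseteq> E1 \<union> E2" using CM eq unfolding E1_def E2_def by auto
  moreover have "E1 \<inter> E2 \<inter> CC = {}" using eq unfolding E1_def E2_def by auto
  ultimately have "E1 \<inter> CC = {} \<or> E2 \<inter> CC = {}"
    using conn o1 o2 unfolding connectedin by blast
  then show ?thesis
  proof
    assume "E1 \<inter> CC = {}"
    then have "\<forall>K\<in>CC. \<not> K \<subseteq> U" using CM unfolding E1_def by auto
    then show ?thesis using eq by auto
  next
    assume "E2 \<inter> CC = {}"
    then have "\<forall>K\<in>CC. K \<inter> V = {}" using CM unfolding E2_def by auto
    then show ?thesis using eq by auto
  qed
qed


lemma td_compact_sep:
  assumes td: "totally_disconnected_space (subtopology X Y)" and oY: "openin X Y"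
    and cL: "compactin X L" and LY: "L \<subseteq> Y" and yY: "y \<in> Y" and yL: "y \<notin> L"
  shows "\<exists>C. openin X C \<and> openin X (Y - C) \<and> C \<subseteq> Y \<and> L \<subseteq> C \<and> y \<notin> C"
proof -
  have Yt: "Y \<subseteq> topspace X" using oY openin_subset by blast
  define P where "P = (\<lambda>z C. openin (subtopology X Y) C \<and> closedin (subtopology X Y) C \<and> z \<in> C \<and> y \<notin> C)"
  have ex: "\<exists>C. P z C" if "z \<in> L" for z
  proof -
    have "z \<in> topspace (subtopology X Y)" "y \<in> topspace (subtopology X Y)" "z \<noteq> y"
      using that LY Yt yY yL by auto
    with td[unfolded totally_disconnected_space_def] show ?thesis unfolding P_def
      by auto
  qed
  define Cf where "Cf = (\<lambda>z. SOME C. P z C)"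
  have Cf: "P z (Cf z)" if "z \<in> L" for z
    unfolding Cf_def using someI_ex[OF ex[OF that]] .
  have opn: "openin X U" if U: "U \<in> Cf ` L" for U
  proof -
    obtain z where "z \<in> L" "U = Cf z" using U by blast
    then have "openin (subtopology X Y) U" using Cf unfolding P_def by simp
    then show ?thesis using oY openin_trans_full by auto
  qed
  have cov: "L \<subseteq> \<Union>(Cf ` L)" using Cf unfolding P_def by blast
  have "\<exists>F. finite F \<and> F \<subseteq> Cf ` L \<and> L \<subseteq> \<Union>F"
    by (rule compactinD[OF cL opn cov])
  then obtain F where F: "finite F" "F \<subseteq> Cf ` L" "L \<subseteq> \<Union>F" by blast
  have oF: "openin X (\<Union>F)" using F opn by (intro openin_Union) auto
  have clF: "\<And>U. U \<in> F \<Longrightarrow> closedin (subtopology X Y) U"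
    using F(2) Cf unfolding P_def by auto
  have cl: "closedin (subtopology X Y) (\<Union>F)"
    using F(1) clF by (rule closedin_Union)
  have o2: "openin X (Y - \<Union>F)"
  proof -
    have "openin (subtopology X Y) (topspace (subtopology X Y) - \<Union>F)"
      using cl by (rule openin_diff[OF openin_topspace])
    moreover have "topspace (subtopology X Y) - \<Union>F = Y - \<Union>F" using Yt by auto
    ultimately show ?thesis using oY openin_trans_full by auto
  qed
  have sub: "\<Union>F \<subseteq> Y" using closedin_subset[OF cl] by auto
  have yn: "y \<notin> \<Union>F" using F(2) Cf unfolding P_def by auto
  show ?thesis using oF o2 sub F(3) yn by blast
qed

theorem proposition5p5:
  fixes X :: "'a topology" and p :: 'a
  assumes "Hausdorff_space X"
    and "hereditarily_disconnected_space X"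
    and "p \<in> topspace X"
    and "totally_disconnected_space (subtopology X (topspace X - {p}))"
  shows "hereditarily_disconnected_space (vietoris X)"
  unfolding hereditarily_disconnected_space_def
proof (intro allI impI)
  note Haus = assms(1) and HD = assms(2) and pX = assms(3) and TD = assms(4)
  fix CC assume H: "CC \<subseteq> topspace (vietoris X) \<and> CC \<noteq> {} \<and> connectedin (vietoris X) CC"
  have conn: "connectedin (vietoris X) CC" and CCne: "CC \<noteq> {}" using H by auto
  show "\<exists>x. CC = {x}"
  proof (rule ccontr)
    assume ns: "\<nexists>x. CC = {x}"
    have tv: "topspace (vietoris X) \<subseteq> {A. A \<noteq> {} \<and> compactin X A}"
      unfolding vietoris_def by simp
    have Kp: "K \<noteq> {} \<and> compactin X K" if "K \<in> CC" for K
    proof -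
      have "K \<in> topspace (vietoris X)" using H that by blast
      then show ?thesis using tv by blast
    qed
    have Ktop: "K \<subseteq> topspace X" if "K \<in> CC" for K
      by (rule compactin_subset_topspace[OF conjunct2[OF Kp[OF that]]])
    have Kcl: "closedin X K" if "K \<in> CC" for K
      by (rule compactin_imp_closedin[OF Haus conjunct2[OF Kp[OF that]]])
    define Y where "Y = topspace X - {p}"
    have "closedin X {p}"
      using Hausdorff_imp_t1_space[OF Haus] pX unfolding t1_space_closedin_singleton by blast
    then have Yopen: "openin X Y" unfolding Y_def by (rule openin_diff[OF openin_topspace])
    define S where "S = \<Union>CC"
    define I where "I = \<Inter>CC"
    define Dv where "Dv = S - I"
    define clW where "clW = X closure_of Dv"
    define W where "W = S \<inter> clW"
    have Stop: "S \<subseteq> topspace X" using Ktop unfolding S_def by blast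
    have Dvsub: "Dv \<subseteq> clW"
      unfolding clW_def by (rule closure_of_subset) (use Stop in \<open>auto simp: Dv_def\<close>)
    have SI: "S - clW \<subseteq> K" if "K \<in> CC" for K
      using that Dvsub unfolding Dv_def I_def by blast
    have clWc: "closedin X clW" unfolding clW_def by simp
    have key: "W \<subseteq> {p}"
    proof (rule ccontr)
      assume "\<not> W \<subseteq> {p}"
      then obtain w where w: "w \<in> W" "w \<noteq> p" by blast
      have Wt: "W \<subseteq> topspace X" using Stop unfolding W_def by blast
      have "\<exists>Op F. openin X Op \<and> closedin X F \<and> S \<inter> clW \<inter> Op = S \<inter> F \<and> S \<inter> clW \<inter> Op \<noteq> {}
                  \<and> p \<notin> S \<inter> clW \<inter> Op"
      proof (cases "connectedin X W")
        case True
        have "W \<subseteq> topspace X \<and> W \<noteq> {} \<and> connectedin X W" using True Wt w by blast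
        then obtain x where "W = {x}" using HD unfolding hereditarily_disconnected_space_def by blast
        then have "W = {w}" using w by blast
        then have W1: "S \<inter> clW = {w}" unfolding W_def .
        have e: "S \<inter> clW \<inter> topspace X = S \<inter> clW" using Stop by blast
        have *: "openin X (topspace X) \<and> closedin X clW \<and> S \<inter> clW \<inter> topspace X = S \<inter> clW
              \<and> S \<inter> clW \<inter> topspace X \<noteq> {} \<and> p \<notin> S \<inter> clW \<inter> topspace X"
          using clWc e W1 w(2) by simp
        show ?thesis by (rule exI[of _ "topspace X"], rule exI[of _ clW]) (fact *)
      next
        case False
        then obtain E1 E2 where E: "openin X E1" "openin X E2" "W \<subseteq> E1 \<union> E2"
          "E1 \<inter> E2 \<inter> W = {}" "E1 \<inter> W \<noteq> {}" "E2 \<inter> W \<noteq> {}"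
          using Wt unfolding connectedin by blast
        show ?thesis
        proof (cases "p \<in> E1")
          case True
          have c: "closedin X (clW \<inter> (topspace X - E1))" using clWc E(1) by blast
          have q1: "S \<inter> clW \<inter> E2 = S \<inter> (clW \<inter> (topspace X - E1))"
            using E(3) E(4) Stop unfolding W_def by blast
          have q2: "S \<inter> clW \<inter> E2 \<noteq> {}" using E(6) unfolding W_def by blast
          have q3: "p \<notin> S \<inter> clW \<inter> E2" using E(4) True unfolding W_def by blast
          show ?thesis
            by (rule exI[of _ E2], rule exI[of _ "clW \<inter> (topspace X - E1)"]) (use E(2) c q1 q2 q3 in blast)
        next
          case False
          have c: "closedin X (clW \<inter> (topspace X - E2))" using clWc E(2) by blast
          have q1: "S \<inter> clW \<inter> E1 = S \<inter> (clW \<inter> (topspace X - E2))"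
            using E(3) E(4) Stop unfolding W_def by blast
          have q2: "S \<inter> clW \<inter> E1 \<noteq> {}" using E(5) unfolding W_def by blast
          have q3: "p \<notin> S \<inter> clW \<inter> E1" using E(4) False unfolding W_def by blast
          show ?thesis
            by (rule exI[of _ E1], rule exI[of _ "clW \<inter> (topspace X - E2)"]) (use E(1) c q1 q2 q3 in blast)
        qed
      qed
      then obtain Op F where OF: "openin X Op" "closedin X F" "S \<inter> clW \<inter> Op = S \<inter> F"
        "S \<inter> clW \<inter> Op \<noteq> {}" "p \<notin> S \<inter> clW \<inter> Op" by blast
      define Q where "Q = S \<inter> clW \<inter> Op"
      obtain q where q: "q \<in> Q" using OF(4) unfolding Q_def by blast
      have "q \<in> X closure_of Dv" "q \<in> Op" using q unfolding Q_def clW_def by auto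
      then obtain y where y: "y \<in> Dv" "y \<in> Op" using OF(1) unfolding in_closure_of by blast
      have yQ: "y \<in> Q" using y Dvsub unfolding Q_def Dv_def by blast
      obtain K2 where K2: "K2 \<in> CC" "y \<notin> K2" using y unfolding Dv_def I_def by blast
      obtain K1 where K1: "K1 \<in> CC" "y \<in> K1" using y unfolding Dv_def S_def by blast
      define L where "L = K2 \<inter> F"
      have cL: "compactin X L"
        unfolding L_def using closed_Int_compactin[OF OF(2) conjunct2[OF Kp[OF K2(1)]]] by (simp add: Int_commute)
      have LQ: "L \<subseteq> Q" using OF(3) K2(1) unfolding L_def Q_def S_def by blast
      have LY: "L \<subseteq> Y" using LQ OF(5) Stop unfolding Q_def Y_def by blast
      have yY: "y \<in> Y" using yQ OF(5) Stop unfolding Q_def Y_def by blast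
      have yL: "y \<notin> L" using K2 unfolding L_def by blast
      obtain C where C: "openin X C" "openin X (Y - C)" "C \<subseteq> Y" "L \<subseteq> C" "y \<notin> C"
        using td_compact_sep[OF TD[folded Y_def] Yopen cL LY yY yL] by blast
      define D where "D = Y - C"
      define Rc where "Rc = X closure_of (S - clW)"
      have RcK2: "Rc \<subseteq> K2"
        unfolding Rc_def by (rule closure_of_minimal[OF SI[OF K2(1)] Kcl[OF K2(1)]])
      have Rcc: "closedin X Rc" unfolding Rc_def by simp
      have SRc: "S - clW \<subseteq> Rc"
        unfolding Rc_def by (rule closure_of_subset) (use Stop in auto)
      define U where "U = (topspace X - F) \<union> C"
      define V where "V = Op \<inter> D \<inter> (topspace X - Rc)"
      have oU: "openin X U" unfolding U_def using OF(2) C(1) by blast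
      have oV: "openin X V" unfolding V_def D_def using OF(1) C(2) Rcc by blast
      have QD: "Q \<inter> D \<inter> Rc = {}"
        using RcK2 C(4) OF(3) unfolding L_def Q_def D_def by blast
      have eqU: "K \<subseteq> U \<longleftrightarrow> K \<inter> Q \<inter> D = {}" if K: "K \<in> CC" for K
      proof -
        have KS: "K \<subseteq> S" using K unfolding S_def by blast
        have KT: "K \<subseteq> topspace X" using KS Stop by (rule order_trans)
        have KQ: "K \<inter> Q = K \<inter> F" using KS OF(3) unfolding Q_def by blast
        have pn: "p \<notin> K \<inter> F" using KQ OF(5) unfolding Q_def by blast
        have a: "K \<subseteq> U \<longleftrightarrow> K \<inter> F \<subseteq> C" using KT unfolding U_def by auto
        have b: "K \<inter> Q \<inter> D = {} \<longleftrightarrow> K \<inter> F \<subseteq> C" using KQ pn KT unfolding D_def Y_def by auto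
        show ?thesis using a b by simp
      qed
      have eqV: "K \<inter> V = {} \<longleftrightarrow> K \<inter> Q \<inter> D = {}" if K: "K \<in> CC" for K
      proof -
        have KS: "K \<subseteq> S" using K unfolding S_def by blast
        have KT: "K \<subseteq> topspace X" using KS Stop by (rule order_trans)
        have s1: "K \<inter> V \<subseteq> K \<inter> Q \<inter> D"
        proof
          fix z assume z: "z \<in> K \<inter> V"
          then have zS: "z \<in> S" using KS by blast
          have zR: "z \<notin> Rc" using z unfolding V_def by blast
          have "z \<in> clW" using zS zR SRc by blast
          then show "z \<in> K \<inter> Q \<inter> D" using z zS unfolding V_def Q_def by blast
        qed
        have s2: "K \<inter> Q \<inter> D \<subseteq> K \<inter> V"
        proof
          fix z assume z: "z \<in> K \<inter> Q \<inter> D"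
          have "z \<notin> Rc" using z QD by blast
          moreover have "z \<in> topspace X" using z KT by blast
          ultimately show "z \<in> K \<inter> V" using z unfolding V_def Q_def by blast
        qed
        have "K \<inter> V = K \<inter> Q \<inter> D" using s1 s2 by (rule subset_antisym)
        then show ?thesis by simp
      qed
      have disj: "(\<forall>K\<in>CC. K \<subseteq> U) \<or> (\<forall>K\<in>CC. K \<inter> V \<noteq> {})"
      proof (rule vietoris_sep[OF conn oU oV])
        show "\<forall>K\<in>CC. (K \<subseteq> U) = (K \<inter> V = {})" using eqU eqV by simp
      qed
      have y1: "y \<in> K1 \<inter> Q \<inter> D" using K1 yQ yY C(5) unfolding D_def by blast
      have k2: "K2 \<inter> Q \<inter> D = {}"
      proof -
        have "K2 \<inter> Q \<subseteq> L" using OF(3) K2(1) unfolding L_def Q_def S_def by blast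
        then show ?thesis using C(4) unfolding D_def by blast
      qed
      show False
        using disj
      proof
        assume "\<forall>K\<in>CC. K \<subseteq> U"
        then have "K1 \<subseteq> U" using K1(1) by blast
        then have "K1 \<inter> Q \<inter> D = {}" using eqU[OF K1(1)] by simp
        then show False using y1 by blast
      next
        assume "\<forall>K\<in>CC. K \<inter> V \<noteq> {}"
        then have "K2 \<inter> V \<noteq> {}" using K2(1) by blast
        then show False using eqV[OF K2(1)] k2 by simp
      qed
    qed
    have Dvp: "Dv \<subseteq> {p}" using key Dvsub unfolding W_def Dv_def by blast
    have KIp: "I \<subseteq> K \<and> K \<subseteq> I \<union> {p}" if K: "K \<in> CC" for K
    proof
      show "I \<subseteq> K" using K unfolding I_def by blast
      show "K \<subseteq> I \<union> {p}" using K Dvp unfolding Dv_def S_def by blast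
    qed
    obtain K1 K2 where KK: "K1 \<in> CC" "K2 \<in> CC" "K1 \<noteq> K2"
    proof -
      obtain K1 where "K1 \<in> CC" using CCne by blast
      moreover have "CC \<noteq> {K1}" using ns by blast
      ultimately obtain K2 where "K2 \<in> CC" "K2 \<noteq> K1" by blast
      then show ?thesis using that \<open>K1 \<in> CC\<close> by blast
    qed
    have Kbeq0: "K = K'" if "K \<in> CC" "K' \<in> CC" "p \<notin> K" "p \<notin> K'" for K K'
    proof (rule subset_antisym)
      show "K \<subseteq> K'" using KIp[OF that(1)] KIp[OF that(2)] that(3) by blast
      show "K' \<subseteq> K" using KIp[OF that(1)] KIp[OF that(2)] that(4) by blast
    qed
    have Kpeq0: "K = K'" if "K \<in> CC" "K' \<in> CC" "p \<in> K" "p \<in> K'" for K K'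
    proof (rule subset_antisym)
      show "K \<subseteq> K'" using KIp[OF that(1)] KIp[OF that(2)] that(4) by blast
      show "K' \<subseteq> K" using KIp[OF that(1)] KIp[OF that(2)] that(3) by blast
    qed
    obtain Ka Kb where Kab: "Ka \<in> CC" "Kb \<in> CC" "p \<in> Ka" "p \<notin> Kb"
    proof (cases "p \<in> K1")
      case True
      then have "p \<notin> K2" using KK Kpeq0 by blast
      then show ?thesis using that[OF KK(1) KK(2) True] by blast
    next
      case False
      then have "p \<in> K2" using KK Kbeq0 by blast
      then show ?thesis using that[OF KK(2) KK(1) _ False] by blast
    qed
    have Kbeq: "K = Kb" if "K \<in> CC" "p \<notin> K" for K
      using Kbeq0[OF that(1) Kab(2) that(2) Kab(4)] .
    have cp: "compactin X {p}" using pX by simp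
    have cKb: "compactin X Kb" using Kp[OF Kab(2)] by blast
    have dj: "disjnt {p} Kb" using Kab(4) by simp
    obtain V V' where VV: "openin X V" "openin X V'" "{p} \<subseteq> V" "Kb \<subseteq> V'" "disjnt V V'"
      by (rule Hausdorff_space_compact_separation[OF Haus cp cKb dj])
    have VKb: "Kb \<inter> V = {}" using VV(4) VV(5) unfolding disjnt_def by blast
    have pV: "p \<in> V" using VV(3) by simp
    have eq: "\<forall>K\<in>CC. (K \<subseteq> Y) \<longleftrightarrow> (K \<inter> V = {})"
    proof
      fix K assume K: "K \<in> CC"
      show "(K \<subseteq> Y) \<longleftrightarrow> (K \<inter> V = {})"
      proof (cases "p \<in> K")
        case True
        have "\<not> K \<subseteq> Y" using True unfolding Y_def by blast
        moreover have "K \<inter> V \<noteq> {}" using True pV by blast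
        ultimately show ?thesis by simp
      next
        case False
        have "K \<subseteq> Y" using False Ktop[OF K] unfolding Y_def by blast
        moreover have "K \<inter> V = {}" using Kbeq[OF K False] VKb by simp
        ultimately show ?thesis by simp
      qed
    qed
    have "(\<forall>K\<in>CC. K \<subseteq> Y) \<or> (\<forall>K\<in>CC. K \<inter> V \<noteq> {})"
      using vietoris_sep[OF conn Yopen VV(1) eq] .
    then show False
    proof
      assume "\<forall>K\<in>CC. K \<subseteq> Y"
      then have "Ka \<subseteq> Y" using Kab(1) by blast
      then show False using Kab(3) unfolding Y_def by blast
    next
      assume "\<forall>K\<in>CC. K \<inter> V \<noteq> {}"
      then show False using Kab(2) VKb by blast
    qed
  qed
qed

end
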